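(* Let $W:\mathbb{N}^\star\times\mathbb{N}^\star\to\mathbb{C}$. Then $(\mathbb{M},\square_W,\times)$ is a commutative ring (with $\square_W$ as addition and pointwise product $\times$ as multiplication) if and only if $W(a,b)=1$ when $\gcd(a,b)=1$ and $W(a,b)=0$ otherwise.
   Context: $\mathbb{M}$ is the set of functions $F:\mathbb{N}^\star\to\mathbb{C}$ with $F(1)=1$ and $F(ab)=F(a)F(b)$ whenever $\gcd(a,b)=1$. For a weight $W$, $(F\,\square_W\,G)(m)=\sum_{ab=m}F(a)G(b)W(a,b)$, and $(F\times G)(m)=F(m)G(m)$. Being a commutative ring includes that both operations map $\mathbb{M}\times\mathbb{M}$ into $\mathbb{M}$. *)

theory Defs
  imports Complex_Main "HOL-Algebra.Ring"
begin

text \<open>Arithmetic functions on the positive integers are modelled as functions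
  nat => complex normalised to the value 0 at 0 (0 is not in the domain).\<close>

definition multM :: "(nat \<Rightarrow> complex) set" where
  "multM = {F. F 0 = 0 \<and> F 1 = 1 \<and>
     (\<forall>a b. 0 < a \<longrightarrow> 0 < b \<longrightarrow> coprime a b \<longrightarrow> F (a * b) = F a * F b)}"

definition wconv :: "(nat \<Rightarrow> nat \<Rightarrow> complex) \<Rightarrow> (nat \<Rightarrow> complex) \<Rightarrow> (nat \<Rightarrow> complex) \<Rightarrow> nat \<Rightarrow> complex" where
  "wconv W F G m = (if m = 0 then 0 else
     (\<Sum>a\<in>{a. a dvd m}. F a * G (m div a) * W a (m div a)))"

definition ptimes :: "(nat \<Rightarrow> complex) \<Rightarrow> (nat \<Rightarrow> complex) \<Rightarrow> nat \<Rightarrow> complex" where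
  "ptimes F G m = F m * G m"

definition multM_struct ::
  "(nat \<Rightarrow> nat \<Rightarrow> complex) \<Rightarrow> (nat \<Rightarrow> complex) \<Rightarrow> (nat \<Rightarrow> complex) \<Rightarrow> (nat \<Rightarrow> complex) ring" where
  "multM_struct W z u = \<lparr>carrier = multM, monoid.mult = ptimes, one = u,
                         zero = z, add = wconv W\<rparr>"

end

theory Submission
  imports Defs "HOL-Computational_Algebra.Primes"
begin

definition mk :: "(nat \<Rightarrow> nat \<Rightarrow> complex) \<Rightarrow> nat \<Rightarrow> complex" where
  "mk g n = (if n = 0 then 0 else \<Prod>p\<in>prime_factors n. g p (multiplicity p n))"

lemma mk_0 [simp]: "mk g 0 = 0" by (simp add: mk_def)
lemma mk_1 [simp]: "mk g 1 = 1" by (simp add: mk_def)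

lemma mk_mult:
  assumes "0 < a" "0 < b" "coprime a b"
  shows "mk g (a * b) = mk g a * mk g b"
proof -
  have pf: "prime_factors (a*b) = prime_factors a \<union> prime_factors b"
    using assms by (simp add: prime_factors_product)
  have disj: "prime_factors a \<inter> prime_factors b = {}"
  proof (rule ccontr)
    assume "prime_factors a \<inter> prime_factors b \<noteq> {}"
    then obtain p where "p \<in> prime_factors a" "p \<in> prime_factors b" by blast
    hence "prime p" "p dvd a" "p dvd b" by (auto simp: in_prime_factors_iff)
    with assms(3) show False
      by (metis coprime_common_divisor_nat not_prime_1)
  qed
  have ma: "multiplicity p (a*b) = multiplicity p a" if "p \<in> prime_factors a" for p
  proof -
    have "prime p" "p dvd a" using that by (auto simp: in_prime_factors_iff)
    hence "\<not> p dvd b" using assms(3)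
      by (metis coprime_common_divisor_nat not_prime_1)
    thus ?thesis using \<open>prime p\<close> assms
      by (simp add: prime_elem_multiplicity_mult_distrib not_dvd_imp_multiplicity_0)
  qed
  have mb: "multiplicity p (a*b) = multiplicity p b" if "p \<in> prime_factors b" for p
  proof -
    have "prime p" "p dvd b" using that by (auto simp: in_prime_factors_iff)
    hence "\<not> p dvd a" using assms(3)
      by (metis coprime_common_divisor_nat not_prime_1)
    thus ?thesis using \<open>prime p\<close> assms
      by (simp add: prime_elem_multiplicity_mult_distrib not_dvd_imp_multiplicity_0)
  qed
  have "mk g (a*b) = (\<Prod>p\<in>prime_factors a \<union> prime_factors b. g p (multiplicity p (a*b)))"
    using assms pf by (simp add: mk_def)
  also have "\<dots> = (\<Prod>p\<in>prime_factors a. g p (multiplicity p (a*b))) * (\<Prod>p\<in>prime_factors b. g p (multiplicity p (a*b)))"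
    by (rule prod.union_disjoint) (use disj in auto)
  also have "\<dots> = mk g a * mk g b"
    using assms ma mb by (simp add: mk_def)
  finally show ?thesis .
qed

lemma mk_in: "mk g \<in> multM"
  unfolding multM_def using mk_mult[of _ _ g] by (simp add: mk_def)

lemma pf_pp: assumes "prime p" "k > 0" shows "prime_factors (p ^ k) = {p}"
  using assms by (auto simp: in_prime_factors_iff prime_gt_0_nat
      intro: primes_dvd_imp_eq[OF _ _ prime_dvd_power])

lemma mk_pp [simp]: assumes "prime p" "k > 0" shows "mk g (p ^ k) = g p k"
  using assms pf_pp[OF assms] by (simp add: mk_def prime_gt_0_nat)

lemma mk_cong: assumes "\<And>p k. prime p \<Longrightarrow> k > 0 \<Longrightarrow> g p k = h p k"
  shows "mk g = mk h"
proof
  fix n show "mk g n = mk h n"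
    unfolding mk_def using assms
    by (auto intro!: prod.cong simp: in_prime_factors_iff prime_multiplicity_gt_zero_iff)
qed

lemma coprime_pp:
  assumes "finite S" "finite T" "S \<inter> T = {}" "\<And>p. p \<in> S \<union> T \<Longrightarrow> prime (p::nat)"
  shows "coprime (\<Prod>p\<in>S. p ^ e p) (\<Prod>p\<in>T. p ^ f p)"
  by (intro prod_coprime_left prod_coprime_right)
     (use assms in \<open>auto intro: primes_coprime\<close>)

lemma multM_prod:
  assumes F: "F \<in> multM" and "finite S" and "\<And>p. p \<in> S \<Longrightarrow> prime (p::nat)"
  shows "F (\<Prod>p\<in>S. p ^ e p) = (\<Prod>p\<in>S. F (p ^ e p))"
  using assms(2,3)
proof (induction S rule: finite_induct)
  case empty then show ?case using F by (simp add: multM_def)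
next
  case (insert q S)
  have cop: "coprime (q ^ e q) (\<Prod>p\<in>S. p ^ e p)"
    using coprime_pp[of "{q}" S e e] insert by auto
  have pos1: "0 < q ^ e q" using insert by (simp add: prime_gt_0_nat)
  have pos2: "0 < (\<Prod>p\<in>S. p ^ e p)" using insert
    by (simp add: prime_gt_0_nat prod_pos)
  have "F (\<Prod>p\<in>insert q S. p ^ e p) = F (q ^ e q * (\<Prod>p\<in>S. p ^ e p))"
    using insert by simp
  also have "\<dots> = F (q ^ e q) * F (\<Prod>p\<in>S. p ^ e p)"
    using F cop pos1 pos2 by (simp add: multM_def)
  also have "\<dots> = (\<Prod>p\<in>insert q S. F (p ^ e p))" using insert by simp
  finally show ?case .
qed

lemma multM_rep:
  assumes F: "F \<in> multM" shows "F = mk (\<lambda>p k. F (p ^ k))"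
proof
  fix n show "F n = mk (\<lambda>p k. F (p ^ k)) n"
  proof (cases "n = 0")
    case True then show ?thesis using F by (simp add: multM_def)
  next
    case False
    have "n = (\<Prod>p\<in>prime_factors n. p ^ multiplicity p n)"
      using prod_prime_factors[of n] False by simp
    hence "F n = F (\<Prod>p\<in>prime_factors n. p ^ multiplicity p n)" by simp
    also have "\<dots> = (\<Prod>p\<in>prime_factors n. F (p ^ multiplicity p n))"
      by (rule multM_prod[OF F]) auto
    finally show ?thesis using False by (simp add: mk_def)
  qed
qed

lemma multM_eq:
  assumes "F \<in> multM" "G \<in> multM"
    "\<And>p k. prime p \<Longrightarrow> k > 0 \<Longrightarrow> F (p ^ k) = G (p ^ k)"
  shows "F = G"
  using multM_rep[OF assms(1)] multM_rep[OF assms(2)] mk_cong[of "\<lambda>p k. F (p ^ k)" "\<lambda>p k. G (p ^ k)"] assms(3)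
  by metis

lemma wconv_unitary:
  assumes Wc: "\<forall>a b. 0 < a \<longrightarrow> 0 < b \<longrightarrow> W a b = (if coprime a b then 1 else 0)"
    and F: "F \<in> multM" and G: "G \<in> multM"
  shows "wconv W F G = mk (\<lambda>p k. F (p ^ k) + G (p ^ k))"
proof (rule ext)
  fix n
  show "wconv W F G n = mk (\<lambda>p k. F (p ^ k) + G (p ^ k)) n"
  proof (cases "n = 0")
    case True then show ?thesis by (simp add: wconv_def)
  next
    case False
    define P where "P = prime_factors n"
    define pp where "pp S = (\<Prod>p\<in>S. p ^ multiplicity p n)" for S
    have finP: "finite P" by (simp add: P_def)
    have primeP: "prime p" if "p \<in> P" for p using that by (auto simp: P_def)
    have posm: "multiplicity p n > 0" if "p \<in> P" for p
      using that False by (auto simp: P_def in_prime_factors_iff intro!: prime_multiplicity_gt_zero_iff[THEN iffD2])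
    have ppP: "pp P = n" using prod_prime_factors[of n] False by (simp add: pp_def P_def)
    have split: "pp S * pp (P - S) = n" if "S \<subseteq> P" for S
      using prod.subset_diff[OF that finP, of "\<lambda>p. p ^ multiplicity p n"] ppP
      by (simp add: pp_def mult.commute)
    have pos: "pp S > 0" if "S \<subseteq> P" for S
      using split[OF that] False by (metis gr0I mult_is_0)
    have dvd: "pp S dvd n" if "S \<subseteq> P" for S
      using split[OF that] by (metis dvd_triv_left)
    have div: "n div pp S = pp (P - S)" if "S \<subseteq> P" for S
      using split[OF that] pos[OF that] by (metis nonzero_mult_div_cancel_left less_not_refl2)
    have cop: "coprime (pp S) (pp (P - S))" if "S \<subseteq> P" for S
      unfolding pp_def
      by (rule coprime_pp) (use that finP primeP in \<open>auto intro: finite_subset\<close>)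
    have unit: "a \<in> pp ` Pow P" if "a dvd n" "coprime a (n div a)" for a
    proof -
      have a0: "a \<noteq> 0" using that False by auto
      have d0: "n div a \<noteq> 0" using that False by (metis dvd_div_eq_0_iff)
      have sub: "prime_factors a \<subseteq> P" using that False unfolding P_def by (intro dvd_prime_factors) auto
      have "multiplicity p a = multiplicity p n" if "p \<in> prime_factors a" for p
      proof -
        have pr: "prime p" "p dvd a" using that by auto
        have "\<not> p dvd (n div a)" using pr \<open>coprime a (n div a)\<close>
          by (metis coprime_common_divisor_nat not_prime_1)
        hence "multiplicity p (n div a) = 0" by (rule not_dvd_imp_multiplicity_0)
        moreover have "n = a * (n div a)" using \<open>a dvd n\<close> by simp
        ultimately show ?thesis using pr a0 d0
          by (metis add.right_neutral prime_elem_multiplicity_mult_distrib prime_imp_prime_elem)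
      qed
      hence "a = pp (prime_factors a)"
        using prod_prime_factors[of a] a0 by (simp add: pp_def)
      thus ?thesis using sub by blast
    qed
    have dvdpp: "q dvd pp S \<longleftrightarrow> q \<in> S" if "S \<subseteq> P" "q \<in> P" for S q
    proof -
      have fS: "finite S" using that finP by (auto intro: finite_subset)
      have "q dvd p ^ multiplicity p n \<longleftrightarrow> q = p" if "p \<in> S" for p
      proof
        assume "q dvd p ^ multiplicity p n"
        hence "q dvd p" using primeP \<open>q \<in> P\<close> by (metis prime_dvd_power)
        thus "q = p" using primeP \<open>q \<in> P\<close> \<open>p \<in> S\<close> \<open>S \<subseteq> P\<close>
          by (metis primes_dvd_imp_eq subsetD)
      next
        assume "q = p"
        have "p \<in> P" using \<open>p \<in> S\<close> \<open>S \<subseteq> P\<close> by blast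
        hence "multiplicity p n > 0" by (rule posm)
        thus "q dvd p ^ multiplicity p n" using \<open>q = p\<close> by (simp add: dvd_power)
      qed
      thus ?thesis unfolding pp_def using prime_dvd_prod_iff[OF fS primeP[OF \<open>q \<in> P\<close>]]
        by auto
    qed
    have inj: "inj_on pp (Pow P)"
    proof (rule inj_onI)
      fix S T assume ST: "S \<in> Pow P" "T \<in> Pow P" "pp S = pp T"
      hence SP: "S \<subseteq> P" and TP: "T \<subseteq> P" by auto
      have "q \<in> S \<longleftrightarrow> q \<in> T" for q
        proof (cases "q \<in> P")
          case True
          then show ?thesis using dvdpp[OF SP True] dvdpp[OF TP True] ST(3) by simp
        next
          case False
          then show ?thesis using SP TP by blast
        qed
      thus "S = T" by blast
    qed
    have "wconv W F G n = (\<Sum>a\<in>{a. a dvd n}. F a * G (n div a) * W a (n div a))"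
      using False by (simp add: wconv_def)
    also have "\<dots> = (\<Sum>a\<in>pp ` Pow P. F a * G (n div a) * W a (n div a))"
    proof (rule sum.mono_neutral_right)
      show "finite {a. a dvd n}" using False by simp
      show "pp ` Pow P \<subseteq> {a. a dvd n}" using dvd by auto
      show "\<forall>a\<in>{a. a dvd n} - pp ` Pow P. F a * G (n div a) * W a (n div a) = 0"
      proof
        fix a assume a: "a \<in> {a. a dvd n} - pp ` Pow P"
        hence "a dvd n" "\<not> coprime a (n div a)" using unit by auto
        moreover have "0 < a" "0 < n div a" using \<open>a dvd n\<close> False
          by (auto intro!: gr0I simp: dvd_div_eq_0_iff)
        ultimately show "F a * G (n div a) * W a (n div a) = 0" using Wc by simp
      qed
    qed
    also have "\<dots> = (\<Sum>S\<in>Pow P. F (pp S) * G (n div pp S) * W (pp S) (n div pp S))"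
      by (rule sum.reindex[OF inj, unfolded comp_def])
    also have "\<dots> = (\<Sum>S\<in>Pow P. (\<Prod>p\<in>S. F (p ^ multiplicity p n)) * (\<Prod>p\<in>P - S. G (p ^ multiplicity p n)))"
    proof (rule sum.cong[OF refl])
      fix S assume S: "S \<in> Pow P"
      hence SP: "S \<subseteq> P" by auto
      have fS: "finite S" using SP finP by (auto intro: finite_subset)
      have "W (pp S) (pp (P - S)) = 1"
        using Wc[rule_format, OF pos[OF SP] pos[of "P - S"]] cop[OF SP] by simp
      hence "W (pp S) (n div pp S) = 1" using div[OF SP] by simp
      moreover have "F (pp S) = (\<Prod>p\<in>S. F (p ^ multiplicity p n))"
        unfolding pp_def by (rule multM_prod[OF F fS]) (use SP primeP in auto)
      moreover have "G (pp (P - S)) = (\<Prod>p\<in>P - S. G (p ^ multiplicity p n))"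
        unfolding pp_def by (rule multM_prod[OF G]) (use finP primeP in auto)
      ultimately show "F (pp S) * G (n div pp S) * W (pp S) (n div pp S) =
          (\<Prod>p\<in>S. F (p ^ multiplicity p n)) * (\<Prod>p\<in>P - S. G (p ^ multiplicity p n))"
        using div[OF SP] by simp
    qed
    also have "\<dots> = (\<Prod>p\<in>P. F (p ^ multiplicity p n) + G (p ^ multiplicity p n))"
      by (rule prod_add[symmetric, OF finP])
    also have "\<dots> = mk (\<lambda>p k. F (p ^ k) + G (p ^ k)) n"
      using False by (simp add: mk_def P_def)
    finally show ?thesis .
  qed
qed

lemma ptimes_in: "F \<in> multM \<Longrightarrow> G \<in> multM \<Longrightarrow> ptimes F G \<in> multM"
  unfolding multM_def ptimes_def by auto

context
  fixes W :: "nat \<Rightarrow> nat \<Rightarrow> complex"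
  assumes Wc: "\<forall>a b. 0 < a \<longrightarrow> 0 < b \<longrightarrow> W a b = (if coprime a b then 1 else 0)"
begin

lemma wc_in: "F \<in> multM \<Longrightarrow> G \<in> multM \<Longrightarrow> wconv W F G \<in> multM"
  using wconv_unitary[OF Wc] mk_in by simp

lemma wc_pp: "F \<in> multM \<Longrightarrow> G \<in> multM \<Longrightarrow> prime p \<Longrightarrow> k > 0 \<Longrightarrow>
    wconv W F G (p ^ k) = F (p ^ k) + G (p ^ k)"
  using wconv_unitary[OF Wc] by simp

lemma backward: "cring (multM_struct W (mk (\<lambda>_ _. 0)) (mk (\<lambda>_ _. 1)))"
proof (rule cringI)
  show "abelian_group (multM_struct W (mk (\<lambda>_ _. 0)) (mk (\<lambda>_ _. 1)))"
  proof (rule abelian_groupI, unfold multM_struct_def ring.simps monoid.simps partial_object.simps)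
    fix x y z assume xyz: "x \<in> multM" "y \<in> multM" "z \<in> multM"
    show "wconv W (wconv W x y) z = wconv W x (wconv W y z)"
      by (rule multM_eq) (use xyz in \<open>simp_all add: wc_in wc_pp\<close>)
  next
    fix x y assume xy: "x \<in> multM" "y \<in> multM"
    show "wconv W x y \<in> multM" using xy by (simp add: wc_in)
    show "wconv W x y = wconv W y x"
      by (rule multM_eq) (use xy in \<open>simp_all add: wc_in wc_pp\<close>)
  next
    show "mk (\<lambda>_ _. 0) \<in> multM" by (rule mk_in)
  next
    fix x assume x: "x \<in> multM"
    show "wconv W (mk (\<lambda>_ _. 0)) x = x"
      by (rule multM_eq) (use x mk_in in \<open>simp_all add: wc_in wc_pp\<close>)
    show "\<exists>y\<in>multM. wconv W y x = mk (\<lambda>_ _. 0)"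
    proof (intro bexI)
      show "wconv W (mk (\<lambda>p k. - x (p ^ k))) x = mk (\<lambda>_ _. 0)"
        by (rule multM_eq) (use x mk_in in \<open>simp_all add: wc_in wc_pp\<close>)
    qed (rule mk_in)
  qed
next
  show "comm_monoid (multM_struct W (mk (\<lambda>_ _. 0)) (mk (\<lambda>_ _. 1)))"
  proof (rule comm_monoidI, unfold multM_struct_def ring.simps monoid.simps partial_object.simps)
    fix x y z assume xyz: "x \<in> multM" "y \<in> multM" "z \<in> multM"
    show "ptimes (ptimes x y) z = ptimes x (ptimes y z)"
      by (simp add: ptimes_def fun_eq_iff mult.assoc)
  next
    fix x y assume xy: "x \<in> multM" "y \<in> multM"
    show "ptimes x y \<in> multM" using xy by (rule ptimes_in)
    show "ptimes x y = ptimes y x" by (simp add: ptimes_def fun_eq_iff mult.commute)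
  next
    show "mk (\<lambda>_ _. 1) \<in> multM" by (rule mk_in)
  next
    fix x assume x: "x \<in> multM"
    show "ptimes (mk (\<lambda>_ _. 1)) x = x"
      by (rule multM_eq) (use x mk_in in \<open>simp_all add: ptimes_in ptimes_def\<close>)
  qed
next
  fix x y z assume xyz: "x \<in> carrier (multM_struct W (mk (\<lambda>_ _. 0)) (mk (\<lambda>_ _. 1)))"
     "y \<in> carrier (multM_struct W (mk (\<lambda>_ _. 0)) (mk (\<lambda>_ _. 1)))"
     "z \<in> carrier (multM_struct W (mk (\<lambda>_ _. 0)) (mk (\<lambda>_ _. 1)))"
  hence xyz': "x \<in> multM" "y \<in> multM" "z \<in> multM" by (simp_all add: multM_struct_def)
  show "(x \<oplus>\<^bsub>multM_struct W (mk (\<lambda>_ _. 0)) (mk (\<lambda>_ _. 1))\<^esub> y) \<otimes>\<^bsub>multM_struct W (mk (\<lambda>_ _. 0)) (mk (\<lambda>_ _. 1))\<^esub> z =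
    x \<otimes>\<^bsub>multM_struct W (mk (\<lambda>_ _. 0)) (mk (\<lambda>_ _. 1))\<^esub> z \<oplus>\<^bsub>multM_struct W (mk (\<lambda>_ _. 0)) (mk (\<lambda>_ _. 1))\<^esub> y \<otimes>\<^bsub>multM_struct W (mk (\<lambda>_ _. 0)) (mk (\<lambda>_ _. 1))\<^esub> z"
    unfolding multM_struct_def ring.simps monoid.simps
    by (rule multM_eq) (use xyz' in \<open>simp_all add: wc_in wc_pp ptimes_in ptimes_def distrib_right\<close>)
qed

end

definition U :: "nat \<Rightarrow> nat \<Rightarrow> complex" where
  "U n = mk (\<lambda>p k. if k = multiplicity p n then 1 else 0)"

lemma U_in: "U n \<in> multM" unfolding U_def by (rule mk_in)

lemma U_self: "0 < n \<Longrightarrow> U n n = 1"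
  unfolding U_def mk_def by simp

lemma U_1 [simp]: "U n 1 = 1" unfolding U_def mk_def by simp
lemma U_1' [simp]: "U n (Suc 0) = 1" unfolding U_def mk_def by simp

lemma U_supp: assumes "U n d \<noteq> 0" shows "d dvd n"
proof -
  have d0: "d \<noteq> 0" using assms unfolding U_def mk_def by (cases "d = 0") simp_all
  hence "\<forall>p\<in>prime_factors d. multiplicity p d = multiplicity p n"
    using assms by (auto simp: U_def mk_def split: if_splits)
  show "d dvd n"
  proof (rule multiplicity_le_imp_dvd[OF d0])
    fix p :: nat assume p: "prime p"
    show "multiplicity p d \<le> multiplicity p n"
    proof (cases "p dvd d")
      case True
      hence "p \<in> prime_factors d" using p d0 by (auto simp: in_prime_factors_iff)
      thus ?thesis using \<open>\<forall>p\<in>prime_factors d. _\<close> by simp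
    next
      case False thus ?thesis by (simp add: not_dvd_imp_multiplicity_0)
    qed
  qed
qed

lemma wconv_single:
  assumes "0 < m" "d0 dvd m"
    "\<And>d. d dvd m \<Longrightarrow> d \<noteq> d0 \<Longrightarrow> F d * G (m div d) * W d (m div d) = 0"
  shows "wconv W F G m = F d0 * G (m div d0) * W d0 (m div d0)"
proof -
  have "wconv W F G m = (\<Sum>a\<in>{a. a dvd m}. F a * G (m div a) * W a (m div a))"
    using assms by (simp add: wconv_def)
  also have "\<dots> = (\<Sum>a\<in>{d0}. F a * G (m div a) * W a (m div a))"
    by (rule sum.mono_neutral_right) (use assms in auto)
  finally show ?thesis by simp
qed

lemma H_val: "0 < n \<Longrightarrow> mk (\<lambda>_ _. 2) n = 2 ^ card (prime_factors n)"
  by (simp add: mk_def)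

lemma noncop_card:
  assumes "0 < a" "0 < b" "\<not> coprime a (b::nat)"
  shows "card (prime_factors (a*b)) < card (prime_factors a) + card (prime_factors b)"
proof -
  have "gcd a b \<noteq> 1" using assms(3) by (simp add: coprime_iff_gcd_eq_1)
  then obtain p where p: "prime p" "p dvd gcd a b" using prime_factor_nat by blast
  hence "p \<in> prime_factors a \<inter> prime_factors b" using assms
    by (auto simp: in_prime_factors_iff)
  hence "card (prime_factors a \<inter> prime_factors b) > 0"
    by (auto simp: card_gt_0_iff)
  moreover have "card (prime_factors a) + card (prime_factors b) =
      card (prime_factors a \<union> prime_factors b) + card (prime_factors a \<inter> prime_factors b)"
    by (rule card_Un_Int) auto
  ultimately show ?thesis using assms by (simp add: prime_factors_product)
qed

context
  fixes W :: "nat \<Rightarrow> nat \<Rightarrow> complex" and z u :: "nat \<Rightarrow> complex"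
  assumes R: "cring (multM_struct W z u)"
begin

interpretation R: cring "multM_struct W z u" by (rule R)

lemma f_add: "F \<in> multM \<Longrightarrow> G \<in> multM \<Longrightarrow> wconv W F G \<in> multM"
  using R.a_closed[of F G] by (simp add: multM_struct_def)

lemma f_zero: "z \<in> multM"
  using R.zero_closed by (simp add: multM_struct_def)

lemma f_lzero: "F \<in> multM \<Longrightarrow> wconv W z F = F"
  using R.l_zero[of F] by (simp add: multM_struct_def)

lemma f_rzero: "F \<in> multM \<Longrightarrow> wconv W F z = F"
  using R.r_zero[of F] by (simp add: multM_struct_def)

lemma f_distr: "F \<in> multM \<Longrightarrow> G \<in> multM \<Longrightarrow> H \<in> multM \<Longrightarrow>
   ptimes (wconv W F G) H = wconv W (ptimes F H) (ptimes G H)"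
  using R.l_distr[of F G H] by (simp add: multM_struct_def)

lemma UU_ab:
  assumes "0 < a" "0 < b"
    and F: "\<And>d. F d \<noteq> 0 \<Longrightarrow> d dvd a" and G: "\<And>d. G d \<noteq> 0 \<Longrightarrow> d dvd b"
  shows "wconv W F G (a*b) = F a * G b * W a b"
proof -
  have "wconv W F G (a*b) = F a * G (a*b div a) * W a (a*b div a)"
  proof (rule wconv_single)
    fix d assume d: "d dvd a*b" "d \<noteq> a"
    show "F d * G (a * b div d) * W d (a * b div d) = 0"
    proof (rule ccontr)
      assume "\<not> ?thesis"
      hence "d dvd a" "(a*b div d) dvd b" using F G by auto
      then obtain k where k: "a = d * k" by (auto elim: dvdE)
      have "d > 0" using k assms by (metis gr0I mult_is_0)
      hence "a*b div d = k*b" using k by simp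
      hence "k * b dvd b" using \<open>(a*b div d) dvd b\<close> by simp
      hence "k = 1" using assms(2) dvd_mult_cancel2 by blast
      thus False using k d by simp
    qed
  qed (use assms in auto)
  thus ?thesis using assms by simp
qed

lemma W_noncop:
  assumes "0 < a" "0 < b" "\<not> coprime a b"
  shows "W a b = 0"
proof -
  define H where "H = mk (\<lambda>_ _. 2)"
  have Hin: "H \<in> multM" unfolding H_def by (rule mk_in)
  have e: "ptimes (wconv W (U a) (U b)) H (a*b) = wconv W (ptimes (U a) H) (ptimes (U b) H) (a*b)"
    using f_distr[OF U_in U_in Hin] by simp
  have l: "ptimes (wconv W (U a) (U b)) H (a*b) = W a b * H (a*b)"
    using UU_ab[OF assms(1,2) U_supp U_supp] U_self[OF assms(1)] U_self[OF assms(2)]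
    by (simp add: ptimes_def)
  have s1: "d dvd a" if "ptimes (U a) H d \<noteq> 0" for d
    using that U_supp[of a d] by (auto simp: ptimes_def)
  have s2: "d dvd b" if "ptimes (U b) H d \<noteq> 0" for d
    using that U_supp[of b d] by (auto simp: ptimes_def)
  have r: "wconv W (ptimes (U a) H) (ptimes (U b) H) (a*b) = H a * H b * W a b"
  proof -
    have "wconv W (ptimes (U a) H) (ptimes (U b) H) (a*b) = ptimes (U a) H a * ptimes (U b) H b * W a b"
      by (rule UU_ab[OF assms(1,2) s1 s2])
    also have "\<dots> = H a * H b * W a b"
      using U_self[OF assms(1)] U_self[OF assms(2)] by (simp add: ptimes_def)
    finally show ?thesis .
  qed
  have ne: "H (a*b) \<noteq> H a * H b"
  proof
    assume "H (a*b) = H a * H b"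
    hence "(2::complex) ^ card (prime_factors (a*b)) = 2 ^ (card (prime_factors a) + card (prime_factors b))"
      using assms by (simp add: H_def H_val power_add)
    hence "of_nat ((2::nat) ^ card (prime_factors (a*b))) = (of_nat (2 ^ (card (prime_factors a) + card (prime_factors b))) :: complex)"
      by simp
    hence "(2::nat) ^ card (prime_factors (a*b)) = 2 ^ (card (prime_factors a) + card (prime_factors b))"
      using of_nat_eq_iff by blast
    thus False using noncop_card[OF assms] by simp
  qed
  from e l r have "W a b * (H (a*b) - H a * H b) = 0" by (simp add: algebra_simps)
  thus ?thesis using ne by simp
qed

lemma W_cop_split:
  assumes a: "0 < a" and b: "0 < b" and cop: "coprime a b"
  shows "W a b = W a 1 * W 1 b"
proof -
  define C where "C = wconv W (U a) (U b)"
  have Cin: "C \<in> multM" unfolding C_def by (rule f_add[OF U_in U_in])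
  have Cm: "C (a*b) = C a * C b" using Cin a b cop by (simp add: multM_def)
  have Cab: "C (a*b) = W a b"
    unfolding C_def using UU_ab[OF a b U_supp U_supp] U_self[OF a] U_self[OF b] by simp
  have Ca: "C a = W a 1"
  proof -
    have "C a = U a a * U b (a div a) * W a (a div a)"
      unfolding C_def
    proof (rule wconv_single)
      fix d assume d: "d dvd a" "d \<noteq> a"
      show "U a d * U b (a div d) * W d (a div d) = 0"
      proof (rule ccontr)
        assume "\<not> ?thesis"
        hence "(a div d) dvd b" using U_supp by auto
        moreover have "(a div d) dvd a" using d(1) by (metis dvd_mult_div_cancel dvd_triv_right)
        ultimately have "a div d = 1" using cop coprime_common_divisor_nat by blast
        hence "a = d" using d(1) by (metis dvd_mult_div_cancel mult.right_neutral)
        thus False using d by simp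
      qed
    qed (use a in auto)
    thus ?thesis using U_self[OF a] a by simp
  qed
  have Cb: "C b = W 1 b"
  proof -
    have "C b = U a 1 * U b (b div 1) * W 1 (b div 1)"
      unfolding C_def
    proof (rule wconv_single)
      fix d assume d: "d dvd b" "d \<noteq> 1"
      show "U a d * U b (b div d) * W d (b div d) = 0"
      proof (rule ccontr)
        assume "\<not> ?thesis"
        hence "d dvd a" using U_supp by auto
        hence "d = 1" using cop d(1) coprime_common_divisor_nat by blast
        thus False using d by simp
      qed
    qed (use b in auto)
    thus ?thesis using U_self[OF b] by simp
  qed
  show ?thesis using Cm Cab Ca Cb by simp
qed

lemma z1: "z 1 = 1" using f_zero by (simp add: multM_def)
lemma z1': "z (Suc 0) = 1" using f_zero by (simp add: multM_def)

lemma zW1: assumes "1 < n" shows "z n * W 1 n = 0"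
proof -
  have "U 1 n = wconv W (U 1) z n" using f_rzero[OF U_in] by simp
  also have "\<dots> = U 1 1 * z (n div 1) * W 1 (n div 1)"
  proof (rule wconv_single)
    fix d assume d: "d dvd n" "d \<noteq> 1"
    show "U 1 d * z (n div d) * W d (n div d) = 0"
      using U_supp[of 1 d] d by auto
  qed (use assms in auto)
  finally have "U 1 n = z n * W 1 n" by simp
  moreover have "U 1 n = 0" using U_supp[of 1 n] assms by auto
  ultimately show ?thesis by simp
qed

lemma zW2: assumes "1 < n" shows "z n * W n 1 = 0"
proof -
  have "U 1 n = wconv W z (U 1) n" using f_lzero[OF U_in] by simp
  also have "\<dots> = z n * U 1 (n div n) * W n (n div n)"
  proof (rule wconv_single)
    fix d assume d: "d dvd n" "d \<noteq> n"
    show "z d * U 1 (n div d) * W d (n div d) = 0"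
    proof (rule ccontr)
      assume "\<not> ?thesis"
      hence "n div d dvd 1" using U_supp[of 1 "n div d"] by auto
      hence "n div d = 1" by simp
      hence "n = d" using d(1) by (metis dvd_mult_div_cancel mult.right_neutral)
      thus False using d by simp
    qed
  qed (use assms in auto)
  finally have "U 1 n = z n * W n 1" using assms by simp
  moreover have "U 1 n = 0" using U_supp[of 1 n] assms by auto
  ultimately show ?thesis by simp
qed

lemma Wn1: assumes n: "0 < n" shows "W n 1 = 1"
proof -
  have "U n n = wconv W (U n) z n" using f_rzero[OF U_in] by simp
  also have "\<dots> = U n n * z (n div n) * W n (n div n)"
  proof (rule wconv_single)
    fix d assume d: "d dvd n" "d \<noteq> n"
    define e where "e = n div d"
    have ne: "n = d * e" using d(1) by (simp add: e_def)
    have d0: "0 < d" "0 < e" using ne n by (auto intro!: gr0I)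
    have "e \<noteq> 1" using ne d(2) by auto
    hence e1: "1 < e" using d0 by linarith
    have "z e * W d e = 0"
    proof (cases "coprime d e")
      case True
      have "z e * W d e = W d 1 * (z e * W 1 e)"
        using W_cop_split[OF d0 True] by (simp add: algebra_simps)
      thus ?thesis by (simp only: zW1[OF e1] mult_zero_right)
    next
      case False
      thus ?thesis using W_noncop[OF d0 False] by simp
    qed
    thus "U n d * z (n div d) * W d (n div d) = 0" by (simp add: e_def)
  qed (use n in auto)
  finally show ?thesis using U_self[OF n] n z1 by simp
qed

lemma W1n: assumes n: "0 < n" shows "W 1 n = 1"
proof -
  have "U n n = wconv W z (U n) n" using f_lzero[OF U_in] by simp
  also have "\<dots> = z 1 * U n (n div 1) * W 1 (n div 1)"
  proof (rule wconv_single)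
    fix d assume d: "d dvd n" "d \<noteq> 1"
    define e where "e = n div d"
    have ne: "n = d * e" using d(1) by (simp add: e_def)
    have d0: "0 < d" "0 < e" using ne n by (auto intro!: gr0I)
    have d1: "1 < d" using d(2) d0 by linarith
    have "z d * W d e = 0"
    proof (cases "coprime d e")
      case True
      have "z d * W d e = W 1 e * (z d * W d 1)"
        using W_cop_split[OF d0 True] by (simp add: algebra_simps)
      thus ?thesis by (simp only: zW2[OF d1] mult_zero_right)
    next
      case False
      thus ?thesis using W_noncop[OF d0 False] by simp
    qed
    thus "z d * U n (n div d) * W d (n div d) = 0" unfolding e_def by auto
  qed (use n in auto)
  finally show ?thesis using U_self[OF n] n z1 by simp
qed

lemma forward: "\<forall>a b. 0 < a \<longrightarrow> 0 < b \<longrightarrow> W a b = (if coprime a b then 1 else 0)"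
proof (intro allI impI)
  fix a b :: nat assume a: "0 < a" and b: "0 < b"
  show "W a b = (if coprime a b then 1 else 0)"
  proof (cases "coprime a b")
    case True
    thus ?thesis using W_cop_split[OF a b True] Wn1[OF a] W1n[OF b] by simp
  next
    case False
    thus ?thesis using W_noncop[OF a b False] by simp
  qed
qed

end

theorem mainTheorem11:
  fixes W :: "nat \<Rightarrow> nat \<Rightarrow> complex"
  shows "(\<exists>z u. cring (multM_struct W z u)) \<longleftrightarrow>
         (\<forall>a b. 0 < a \<longrightarrow> 0 < b \<longrightarrow> W a b = (if coprime a b then 1 else 0))"
proof
  assume "\<exists>z u. cring (multM_struct W z u)"
  then obtain z u where "cring (multM_struct W z u)" by blast
  thus "\<forall>a b. 0 < a \<longrightarrow> 0 < b \<longrightarrow> W a b = (if coprime a b then 1 else 0)"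
    by (rule forward)
next
  assume "\<forall>a b. 0 < a \<longrightarrow> 0 < b \<longrightarrow> W a b = (if coprime a b then 1 else 0)"
  thus "\<exists>z u. cring (multM_struct W z u)" by (blast intro: backward)
qed

end
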